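(* Let $\kappa$ be a cardinal (or ordinal), let $C_\alpha$ ($\alpha<\kappa$) be compact metric spaces, let $C=\prod_{\alpha<\kappa}C_\alpha$, and let $X\subseteq C$ and $r\colon C\to X$ be a continuous map with $r(x)=x$ for all $x\in X$. Let $S\subseteq\kappa$ be $r$-admissible. Then the map $p_S\colon X\to X_S$, $p_S(x)=x\restriction S$, where $X_S=\{x\restriction S: x\in X\}\subseteq \prod_{\alpha\in S}C_\alpha$, is an open retraction.
   Context: A set $S\subseteq\kappa$ is called $r$-admissible if for all $x,x'\in C$, $x\restriction S=x'\restriction S$ implies $r(x)\restriction S=r(x')\restriction S$. A retraction is a continuous map $f\colon X\to Y$ which has a continuous right inverse, i.e. there is a continuous $j\colon Y\to X$ with $f\circ j=\mathrm{id}_Y$. An open retraction is a retraction which is an open map. All spaces are completely regular. *)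

theory Defs
  imports "HOL-Analysis.Analysis"
begin

definition r_admissible :: "('i \<Rightarrow> 'a) topology \<Rightarrow> (('i \<Rightarrow> 'a) \<Rightarrow> ('i \<Rightarrow> 'a)) \<Rightarrow> 'i set \<Rightarrow> bool" where
  "r_admissible C r S \<longleftrightarrow>
     (\<forall>x\<in>topspace C. \<forall>x'\<in>topspace C.
        restrict x S = restrict x' S \<longrightarrow> restrict (r x) S = restrict (r x') S)"

definition open_retraction :: "'a topology \<Rightarrow> 'b topology \<Rightarrow> ('a \<Rightarrow> 'b) \<Rightarrow> bool" where
  "open_retraction X Y f \<longleftrightarrow> retraction_map X Y f \<and> open_map X Y f"

end

theory Submission
  imports Defs
begin

lemma restr_cont:
  assumes "S \<subseteq> K"
  shows "continuous_map (product_topology T K) (product_topology T S) (\<lambda>x. restrict x S)"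
  unfolding continuous_map_componentwise
proof (intro conjI ballI)
  show "(\<lambda>x. restrict x S) ` topspace (product_topology T K) \<subseteq> extensional S" by auto
  fix k assume "k \<in> S"
  then show "continuous_map (product_topology T K) (T k) (\<lambda>x. restrict x S k)"
  proof -
    have "k \<in> K" using assms \<open>k \<in> S\<close> by blast
    then show ?thesis using \<open>k \<in> S\<close> by (simp add: continuous_map_product_projection)
  qed
qed

lemma restr_open:
  assumes "S \<subseteq> K"
  shows "open_map (product_topology T K) (product_topology T S) (\<lambda>x. restrict x S)"
  unfolding open_map_def
proof (intro allI impI)
  fix V assume V: "openin (product_topology T K) V"
  show "openin (product_topology T S) ((\<lambda>x. restrict x S) ` V)"
    unfolding openin_product_topology_alt
  proof
    fix y assume "y \<in> (\<lambda>x. restrict x S) ` V"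
    then obtain v where v: "v \<in> V" "y = restrict v S" by auto
    obtain U where U: "finite {i \<in> K. U i \<noteq> topspace (T i)}" "\<forall>i\<in>K. openin (T i) (U i)"
        "v \<in> Pi\<^sub>E K U" "Pi\<^sub>E K U \<subseteq> V"
      using V v(1) unfolding openin_product_topology_alt by meson
    show "\<exists>U. finite {i \<in> S. U i \<noteq> topspace (T i)} \<and> (\<forall>i\<in>S. openin (T i) (U i)) \<and>
              y \<in> Pi\<^sub>E S U \<and> Pi\<^sub>E S U \<subseteq> (\<lambda>x. restrict x S) ` V"
    proof (intro exI conjI)
      show "finite {i \<in> S. U i \<noteq> topspace (T i)}"
        proof (rule finite_subset[OF _ U(1)])
        show "{i \<in> S. U i \<noteq> topspace (T i)} \<subseteq> {i \<in> K. U i \<noteq> topspace (T i)}"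
          using assms by blast
      qed
      show "\<forall>i\<in>S. openin (T i) (U i)" using U(2) assms by auto
      show "y \<in> Pi\<^sub>E S U" using U(3) v(2) assms by auto
      show "Pi\<^sub>E S U \<subseteq> (\<lambda>x. restrict x S) ` V"
      proof
        fix z assume z: "z \<in> Pi\<^sub>E S U"
        define w where "w = (\<lambda>i\<in>K. if i \<in> S then z i else v i)"
        have "w \<in> Pi\<^sub>E K U"
        proof (rule PiE_I)
          fix i assume "i \<in> K"
          then show "w i \<in> U i"
            proof (cases "i \<in> S")
            case True
            then have "w i = z i" using \<open>i \<in> K\<close> by (simp add: w_def)
            moreover have "z i \<in> U i" using z True by (rule PiE_mem)
            ultimately show ?thesis by simp
          next
            case False
            then have "w i = v i" using \<open>i \<in> K\<close> by (simp add: w_def)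
            moreover have "v i \<in> U i" using U(3) \<open>i \<in> K\<close> by (rule PiE_mem)
            ultimately show ?thesis by simp
          qed
        next
          fix i assume "i \<notin> K" then show "w i = undefined" by (simp add: w_def)
        qed
        hence "w \<in> V" using U(4) by (rule subsetD[rotated])
        moreover have "z = restrict w S" proof (rule ext)
          fix i show "z i = restrict w S i"
            proof (cases "i \<in> S")
              case True then have "i \<in> K" using assms by blast
              then show ?thesis using True by (simp add: w_def)
            next
              case False
              have "z i = undefined" using z False by (rule PiE_arb)
              then show ?thesis using False by simp
            qed
        qed
        ultimately show "z \<in> (\<lambda>x. restrict x S) ` V" by blast
      qed
    qed
  qed
qed

lemma ext_cont:
  assumes "S \<subseteq> K" "x0 \<in> topspace (product_topology T K)"
  shows "continuous_map (product_topology T S) (product_topology T K)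
           (\<lambda>y. \<lambda>i\<in>K. if i \<in> S then y i else x0 i)"
  unfolding continuous_map_componentwise
proof (intro conjI ballI)
  show "(\<lambda>y. \<lambda>i\<in>K. if i \<in> S then y i else x0 i) ` topspace (product_topology T S) \<subseteq> extensional K"
    by auto
  fix k assume k: "k \<in> K"
  show "continuous_map (product_topology T S) (T k) (\<lambda>y. (\<lambda>i\<in>K. if i \<in> S then y i else x0 i) k)"
  proof (cases "k \<in> S")
    case True
    then show ?thesis using k by (simp add: continuous_map_product_projection)
  next
    case False
    have "x0 k \<in> topspace (T k)" using assms(2) k by auto
    then show ?thesis using k False by simp
  qed
qed

theorem lemma2p1:
  fixes K :: "'i set" and T :: "'i \<Rightarrow> 'a topology"
    and X :: "('i \<Rightarrow> 'a) set" and r :: "('i \<Rightarrow> 'a) \<Rightarrow> ('i \<Rightarrow> 'a)" and S :: "'i set"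
  assumes "\<And>\<alpha>. \<alpha> \<in> K \<Longrightarrow> compact_space (T \<alpha>) \<and> metrizable_space (T \<alpha>)"
    and "X \<subseteq> topspace (product_topology T K)"
    and "continuous_map (product_topology T K) (subtopology (product_topology T K) X) r"
    and "\<And>x. x \<in> X \<Longrightarrow> r x = x"
    and "S \<subseteq> K"
    and "r_admissible (product_topology T K) r S"
  shows "open_retraction (subtopology (product_topology T K) X)
           (subtopology (product_topology T S) ((\<lambda>x. restrict x S) ` X))
           (\<lambda>x. restrict x S)"
proof -
  let ?P = "product_topology T K" and ?Q = "product_topology T S" and ?p = "\<lambda>x. restrict x S"
  note XP = assms(2) and rc = assms(3) and rid = assms(4) and SK = assms(5)
  have adm: "\<And>x x'. x \<in> topspace ?P \<Longrightarrow> x' \<in> topspace ?P \<Longrightarrow> restrict x S = restrict x' S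
     \<Longrightarrow> restrict (r x) S = restrict (r x') S"
    using assms(6) unfolding r_admissible_def by blast
  have pc0: "continuous_map (subtopology ?P X) ?Q ?p"
    by (rule continuous_map_from_subtopology[OF restr_cont[OF SK]])
  have "?p \<in> topspace (subtopology ?P X) \<rightarrow> ?p ` X" by auto
  with pc0 have pc: "continuous_map (subtopology ?P X) (subtopology ?Q (?p ` X)) ?p"
    by (rule continuous_map_into_subtopology)
  have retr: "retraction_map (subtopology ?P X) (subtopology ?Q (?p ` X)) ?p"
  proof (cases "X = {}")
    case True
    have "continuous_map (subtopology ?Q (?p ` X)) (subtopology ?P X) id"
      using True by simp
    moreover have "\<forall>y \<in> topspace (subtopology ?Q (?p ` X)). ?p (id y) = y"
      using True by simp
    ultimately show ?thesis using pc
      unfolding retraction_map_def retraction_maps_def by blast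
  next
    case False
    then obtain x0 where x0: "x0 \<in> X" by auto
    hence x0P: "x0 \<in> topspace ?P" using XP by (rule subsetD[rotated])
    define e where "e = (\<lambda>y. \<lambda>i\<in>K. if i \<in> S then y i else x0 (i::'i))"
    have ec: "continuous_map ?Q ?P e" unfolding e_def by (rule ext_cont[OF SK x0P])
    have gc: "continuous_map (subtopology ?Q (?p ` X)) (subtopology ?P X) (r \<circ> e)"
      by (intro continuous_map_from_subtopology continuous_map_compose[OF ec rc])
    have "\<forall>y \<in> topspace (subtopology ?Q (?p ` X)). ?p ((r \<circ> e) y) = y"
    proof
      fix y assume y: "y \<in> topspace (subtopology ?Q (?p ` X))"
      then obtain x where x: "x \<in> X" "y = restrict x S" by auto
      have xP: "x \<in> topspace ?P" using XP x(1) by (rule subsetD)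
      have yQ: "y \<in> topspace ?Q" using y by simp
      have eP: "e y \<in> topspace ?P"
        using continuous_map_image_subset_topspace[OF ec] yQ by blast
      have "restrict (e y) S = restrict x S" proof (rule ext)
        fix i show "restrict (e y) S i = restrict x S i"
        proof (cases "i \<in> S")
          case True
          then have "i \<in> K" using SK by blast
          then have "e y i = y i" using True by (simp add: e_def)
          then show ?thesis using True x(2) by simp
        next
          case False then show ?thesis by simp
        qed
      qed
      hence "restrict (r (e y)) S = restrict (r x) S" using adm eP xP by blast
      then show "?p ((r \<circ> e) y) = y" using x rid by simp
    qed
    then show ?thesis using pc gc unfolding retraction_map_def retraction_maps_def by blast
  qed
  have om: "open_map (subtopology ?P X) (subtopology ?Q (?p ` X)) ?p"
    unfolding open_map_def
  proof (intro allI impI)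
    fix U assume U: "openin (subtopology ?P X) U"
    hence "U \<subseteq> topspace (subtopology ?P X)" by (rule openin_subset)
    hence UX: "U \<subseteq> X" by (simp only: topspace_subtopology) blast
    define V where "V = {z \<in> topspace ?P. r z \<in> U}"
    have Vo: "openin ?P V" unfolding V_def by (rule openin_continuous_map_preimage[OF rc U])
    have "?p ` U = ?p ` V \<inter> ?p ` X"
    proof
      show "?p ` U \<subseteq> ?p ` V \<inter> ?p ` X"
      proof
        fix y assume "y \<in> ?p ` U"
        then obtain x where x: "x \<in> U" "y = ?p x" by auto
        hence "x \<in> X" using UX by blast
        hence "x \<in> topspace ?P" "r x = x" using XP rid by (blast, blast)
        hence "x \<in> V" using \<open>x \<in> U\<close> unfolding V_def by simp
        thus "y \<in> ?p ` V \<inter> ?p ` X" using x \<open>x \<in> X\<close> by blast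
      qed
      show "?p ` V \<inter> ?p ` X \<subseteq> ?p ` U"
      proof
        fix y assume "y \<in> ?p ` V \<inter> ?p ` X"
        then obtain v x where v: "v \<in> V" "y = ?p v" and x: "x \<in> X" "y = ?p x" by blast
        have vP: "v \<in> topspace ?P" and rv: "r v \<in> U" using v(1) unfolding V_def by blast+
        have xP: "x \<in> topspace ?P" using XP x(1) by (rule subsetD)
        have "restrict (r v) S = restrict (r x) S" using adm[OF vP xP] v(2) x(2) by simp
        hence "y = ?p (r v)" using x rid[OF x(1)] by simp
        thus "y \<in> ?p ` U" using rv by blast
      qed
    qed
    moreover have "openin ?Q (?p ` V)" using restr_open[OF SK] Vo unfolding open_map_def by blast
    ultimately show "openin (subtopology ?Q (?p ` X)) (?p ` U)"
      unfolding openin_subtopology by blast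
  qed
  show ?thesis unfolding open_retraction_def using retr om by blast
qed

end
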